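(* Suppose the predictions are stable: $\sqrt{K\,\mathrm{Var}(f^{(1)}(X)-\bar f(X)\mid f^{(1)})}\xrightarrow{L^1}0$ as $n\to\infty$. For $j\in[K]$ define $$F_j=\frac{1}{\sqrt n}\sum_{i\in I_j}\Big(f^{(j)}(X_i)-\mathbb{E}_X[f^{(j)}(X)]-\big(\bar f(X_i)-\mathbb{E}[\bar f(X)]\big)\Big).$$ Then $\sum_{j=1}^K F_j\xrightarrow{p}0$.
   Context: Setting: $(X_i,Y_i)_{i\le n}$ i.i.d. from $\mathbb{P}$; $X\sim\mathbb{P}_X$ is an independent generic feature draw. Folds $I_1,\dots,I_K$ are consecutive blocks of size $n/K$ of $\{1,\dots,n\}$; $f^{(j)}$ is the output of a possibly randomized training algorithm applied to $\{(X_i,Y_i)\}_{i\notin I_j}$ (so $f^{(j)}$ is independent of $(X_i)_{i\in I_j}$); $\bar f(x)=\mathbb{E}[f^{(1)}(x)]$. $\mathbb{E}_X$, $\mathrm{Var}_X$ denote expectation and variance over the independent draw $X$ conditionally on everything else. Second moments are finite. *)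

theory Defs
  imports "HOL-Probability.Probability"
begin

text \<open>Conventions (0-based indices). At stage m of the asymptotic sequence the sample
size is N m, the number of folds is K m, the fold size is s = N m div K m, and fold j
(for j < K m) is the block of consecutive indices {j*s ..< (j+1)*s}.\<close>

definition fold_size :: "nat \<Rightarrow> nat \<Rightarrow> nat" where
  "fold_size n k = n div k"

definition fold_idx :: "nat \<Rightarrow> nat \<Rightarrow> nat \<Rightarrow> nat set" where
  "fold_idx n k j = {j * fold_size n k ..< (j + 1) * fold_size n k}"

definition train_data :: "nat \<Rightarrow> nat \<Rightarrow> nat \<Rightarrow> (nat \<Rightarrow> 'a) \<Rightarrow> (nat \<Rightarrow> 'a)" where
  "train_data n k j d = (\<lambda>i\<in>{..< n - fold_size n k}.
      d (if i < j * fold_size n k then i else i + fold_size n k))"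

text \<open>The sample space: n i.i.d. data points from P, and independent randomisation
r_j ~ R for each fold's training run.\<close>

definition sample_space ::
  "('x \<times> 'y) measure \<Rightarrow> 'r measure \<Rightarrow> nat \<Rightarrow> nat \<Rightarrow> ((nat \<Rightarrow> 'x \<times> 'y) \<times> (nat \<Rightarrow> 'r)) measure" where
  "sample_space P R n k = (PiM {..<n} (\<lambda>_. P)) \<Otimes>\<^sub>M (PiM {..<k} (\<lambda>_. R))"

definition fitted ::
  "((nat \<Rightarrow> 'x \<times> 'y) \<Rightarrow> 'r \<Rightarrow> 'x \<Rightarrow> real) \<Rightarrow> nat \<Rightarrow> nat \<Rightarrow> nat
     \<Rightarrow> (nat \<Rightarrow> 'x \<times> 'y) \<times> (nat \<Rightarrow> 'r) \<Rightarrow> 'x \<Rightarrow> real" where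
  "fitted A n k j \<omega> = A (train_data n k j (fst \<omega>)) (snd \<omega> j)"

text \<open>fbar(x) = E[f^(1)(x)] (fold 1 is index 0).\<close>

definition fbar ::
  "('x \<times> 'y) measure \<Rightarrow> 'r measure \<Rightarrow> ((nat \<Rightarrow> 'x \<times> 'y) \<Rightarrow> 'r \<Rightarrow> 'x \<Rightarrow> real)
     \<Rightarrow> nat \<Rightarrow> nat \<Rightarrow> 'x \<Rightarrow> real" where
  "fbar P R A n k x = (\<integral>\<omega>. fitted A n k 0 \<omega> x \<partial>sample_space P R n k)"

definition varX :: "'x measure \<Rightarrow> ('x \<Rightarrow> real) \<Rightarrow> real" where
  "varX PX g = (\<integral>x. (g x - (\<integral>z. g z \<partial>PX))\<^sup>2 \<partial>PX)"

definition F_stat ::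
  "'x measure \<Rightarrow> ('x \<times> 'y) measure \<Rightarrow> 'r measure \<Rightarrow> ((nat \<Rightarrow> 'x \<times> 'y) \<Rightarrow> 'r \<Rightarrow> 'x \<Rightarrow> real)
     \<Rightarrow> nat \<Rightarrow> nat \<Rightarrow> nat \<Rightarrow> (nat \<Rightarrow> 'x \<times> 'y) \<times> (nat \<Rightarrow> 'r) \<Rightarrow> real" where
  "F_stat PX P R A n k j \<omega> =
     (1 / sqrt (real n)) * (\<Sum>i\<in>fold_idx n k j.
        fitted A n k j \<omega> (fst (fst \<omega> i)) - (\<integral>x. fitted A n k j \<omega> x \<partial>PX)
        - (fbar P R A n k (fst (fst \<omega> i)) - (\<integral>x. fbar P R A n k x \<partial>PX)))"

end

theory Submission
  imports Defs
begin
lemma scale_ineq: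
  fixes s k n :: nat and V :: real
  assumes "s * k \<le> n" "0 < k" "0 \<le> V"
  shows "1 / sqrt (real n) * sqrt (real s * V) \<le> sqrt (V / real k)"
proof (cases "n = 0")
  case True
  then have "s = 0" using assms by simp
  then show ?thesis using assms by simp
next
  case False
  have "1 / sqrt (real n) * sqrt (real s * V) = sqrt (real s * V / real n)"
    by (simp add: real_sqrt_divide)
  also have "\<dots> \<le> sqrt (V / real k)"
  proof (rule real_sqrt_le_mono)
    have "real s * real k \<le> real n" using assms(1) by (metis of_nat_le_iff of_nat_mult)
    then have "real s * real k * V \<le> real n * V" using assms(3) by (intro mult_right_mono)
    then show "real s * V / real n \<le> V / real k"
      using False assms(2) by (simp add: divide_simps algebra_simps)
  qed
  finally show ?thesis .
qed

lemma iid_bound: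
  fixes u :: "'a \<Rightarrow> real" and I :: "'i set"
  assumes Q: "prob_space Q" and I: "finite I"
    and u[measurable]: "u \<in> borel_measurable Q"
    and u2: "integrable Q (\<lambda>z. (u z)^2)" and u0: "integral\<^sup>L Q u = 0"
  shows "(\<integral>\<^sup>+a. ennreal \<bar>\<Sum>i\<in>I. u (a i)\<bar> \<partial>PiM I (\<lambda>_. Q))
          \<le> ennreal (sqrt (real (card I) * (\<integral>z. (u z)^2 \<partial>Q)))"
proof -
  interpret Q: prob_space Q by fact
  define M where "M = PiM I (\<lambda>_. Q)"
  interpret M: prob_space M unfolding M_def by (intro prob_space_PiM Q)
  interpret ps: product_sigma_finite "\<lambda>_::'i. Q"
    by (simp add: product_sigma_finite_def Q.sigma_finite_measure_axioms)
  have ui: "integrable Q u" by (rule Q.square_integrable_imp_integrable[OF u u2])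
  have dc: "distr M Q (\<lambda>\<omega>. \<omega> i) = Q" if "i \<in> I" for i
    unfolding M_def using distr_PiM_component[of I "\<lambda>_. Q" i] that Q by auto
  have comp: "integrable M (\<lambda>a. f (a i)) \<and> (\<integral>a. f (a i) \<partial>M) = integral\<^sup>L Q f"
    if "i \<in> I" "f \<in> borel_measurable Q" "integrable Q f" for i and f :: "'a \<Rightarrow> real"
  proof -
    have m: "(\<lambda>\<omega>. \<omega> i) \<in> measurable M Q" unfolding M_def using that by simp
    show ?thesis
      using integrable_distr_eq[OF m, of f] integral_distr[OF m, of f] that dc[OF that(1)] by simp
  qed
  have iprod: "integrable M (\<lambda>a. u (a i) * u (a j))" if "i \<in> I" "j \<in> I" for i j
  proof (rule Bochner_Integration.integrable_bound)
    show "integrable M (\<lambda>a. (u (a i))^2 + (u (a j))^2)"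
      using comp[OF that(1), of "\<lambda>z. (u z)^2"] comp[OF that(2), of "\<lambda>z. (u z)^2"] u2 by auto
    show "(\<lambda>a. u (a i) * u (a j)) \<in> borel_measurable M" unfolding M_def using that by simp
    show "AE a in M. norm (u (a i) * u (a j)) \<le> norm ((u (a i))^2 + (u (a j))^2)"
    proof (rule AE_I2)
      fix a
      have "2 * \<bar>u (a i)\<bar> * \<bar>u (a j)\<bar> \<le> (u (a i))^2 + (u (a j))^2"
        using sum_squares_bound[of "\<bar>u (a i)\<bar>" "\<bar>u (a j)\<bar>"] by (simp add: power2_eq_square)
      moreover have "0 \<le> \<bar>u (a i)\<bar> * \<bar>u (a j)\<bar>" by simp
      moreover have "norm (u (a i) * u (a j)) = \<bar>u (a i)\<bar> * \<bar>u (a j)\<bar>" by (simp add: abs_mult)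
      moreover have "norm ((u (a i))^2 + (u (a j))^2) = (u (a i))^2 + (u (a j))^2" by simp
      ultimately show "norm (u (a i) * u (a j)) \<le> norm ((u (a i))^2 + (u (a j))^2)"
        by linarith
    qed
  qed
  have cross: "(\<integral>a. u (a i) * u (a j) \<partial>M) = 0" if "i \<in> I" "j \<in> I" "i \<noteq> j" for i j
  proof -
    have d: "distr M (PiM {i,j} (\<lambda>_. Q)) (\<lambda>\<omega>. \<lambda>n\<in>{i,j}. \<omega> n) = PiM {i,j} (\<lambda>_. Q)"
      unfolding M_def using distr_PiM_reindex[of I "\<lambda>_. Q" id "{i,j}"] that Q by (simp add: Pi_iff)
    have m: "(\<lambda>\<omega>. \<lambda>n\<in>{i,j}. \<omega> n) \<in> measurable M (PiM {i,j} (\<lambda>_. Q))"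
      unfolding M_def by (intro measurable_restrict measurable_component_singleton) (use that in auto)
    have "(\<integral>a. u (a i) * u (a j) \<partial>M) = (\<integral>x. (\<Prod>l\<in>{i,j}. u (x l)) \<partial>PiM {i,j} (\<lambda>_. Q))"
      using integral_distr[OF m, of "\<lambda>x. (\<Prod>l\<in>{i,j}. u (x l))"] d that by simp
    also have "\<dots> = (\<Prod>l\<in>{i,j}. integral\<^sup>L Q u)"
      by (rule ps.product_integral_prod) (use ui in auto)
    finally show ?thesis using u0 that by simp
  qed
  define Y where "Y a = (\<Sum>i\<in>I. u (a i))" for a
  have Ym[measurable]: "Y \<in> borel_measurable M" unfolding Y_def M_def by measurable
  have Yi: "integrable M Y" unfolding Y_def using comp[OF _ u ui] by auto
  have Y2eq: "(Y a)^2 = (\<Sum>i\<in>I. \<Sum>j\<in>I. u (a i) * u (a j))" for a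
    unfolding Y_def power2_eq_square sum_product ..
  have Y2i: "integrable M (\<lambda>a. (Y a)^2)" unfolding Y2eq using iprod by auto
  have "(\<integral>a. (Y a)^2 \<partial>M) = (\<Sum>i\<in>I. \<Sum>j\<in>I. \<integral>a. u (a i) * u (a j) \<partial>M)"
    unfolding Y2eq using iprod by (simp add: Bochner_Integration.integral_sum)
  also have "\<dots> = (\<Sum>i\<in>I. \<integral>a. u (a i) * u (a i) \<partial>M)"
  proof (rule sum.cong[OF refl])
    fix i assume i: "i \<in> I"
    have "(\<Sum>j\<in>I. \<integral>a. u (a i) * u (a j) \<partial>M) = (\<Sum>j\<in>{i}. \<integral>a. u (a i) * u (a j) \<partial>M)"
      by (rule sum.mono_neutral_right) (use I i cross in auto)
    then show "(\<Sum>j\<in>I. \<integral>a. u (a i) * u (a j) \<partial>M) = (\<integral>a. u (a i) * u (a i) \<partial>M)" by simp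
  qed
  also have "\<dots> = (\<Sum>i\<in>I. \<integral>z. (u z)^2 \<partial>Q)"
    using comp[OF _ _ u2] by (simp add: power2_eq_square)
  finally have EY2: "(\<integral>a. (Y a)^2 \<partial>M) = real (card I) * (\<integral>z. (u z)^2 \<partial>Q)" by simp
  have aYi: "integrable M (\<lambda>a. \<bar>Y a\<bar>)" using Yi by auto
  have "M.variance (\<lambda>a. \<bar>Y a\<bar>) = (\<integral>a. \<bar>Y a\<bar>^2 \<partial>M) - (\<integral>a. \<bar>Y a\<bar> \<partial>M)^2"
    by (rule M.variance_eq) (use aYi Y2i in auto)
  moreover have "M.variance (\<lambda>a. \<bar>Y a\<bar>) \<ge> 0" by (simp add: integral_nonneg)
  ultimately have "(\<integral>a. \<bar>Y a\<bar> \<partial>M)^2 \<le> (\<integral>a. (Y a)^2 \<partial>M)" by simp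
  then have le: "(\<integral>a. \<bar>Y a\<bar> \<partial>M) \<le> sqrt (real (card I) * (\<integral>z. (u z)^2 \<partial>Q))"
    using EY2 by (simp add: real_le_rsqrt)
  have "(\<integral>\<^sup>+a. ennreal \<bar>Y a\<bar> \<partial>M) = ennreal (\<integral>a. \<bar>Y a\<bar> \<partial>M)"
    by (rule nn_integral_eq_integral) (use aYi in auto)
  with le show ?thesis unfolding M_def Y_def by simp
qed


lemma train_distr:
  fixes P :: "'p measure" and R :: "'r measure" and \<sigma> :: "nat \<Rightarrow> nat"
  assumes P: "prob_space P" and R: "prob_space R" and inj: "inj_on \<sigma> {..<m'}"
    and into: "\<sigma> \<in> {..<m'} \<rightarrow> S" and j: "j < k"
  shows "distr (PiM S (\<lambda>_. P) \<Otimes>\<^sub>M PiM {..<k} (\<lambda>_. R)) (PiM {..<m'} (\<lambda>_. P) \<Otimes>\<^sub>M R)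
           (\<lambda>(b,r). (\<lambda>i\<in>{..<m'}. b (\<sigma> i), r j)) = PiM {..<m'} (\<lambda>_. P) \<Otimes>\<^sub>M R"
proof -
  have d1: "distr (PiM S (\<lambda>_. P)) (PiM {..<m'} (\<lambda>_. P)) (\<lambda>b. \<lambda>i\<in>{..<m'}. b (\<sigma> i)) = PiM {..<m'} (\<lambda>_. P)"
    using distr_PiM_reindex[of S "\<lambda>_. P" \<sigma> "{..<m'}"] P inj into by simp
  have d2: "distr (PiM {..<k} (\<lambda>_. R)) R (\<lambda>r. r j) = R"
    using distr_PiM_component[of "{..<k}" "\<lambda>_. R" j] R j by simp
  have m1: "(\<lambda>b. \<lambda>i\<in>{..<m'}. b (\<sigma> i)) \<in> measurable (PiM S (\<lambda>_. P)) (PiM {..<m'} (\<lambda>_. P))"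
    by (intro measurable_restrict measurable_component_singleton) (use into in auto)
  have m2: "(\<lambda>r. r j) \<in> measurable (PiM {..<k} (\<lambda>_. R)) R"
    using j by simp
  have sf: "sigma_finite_measure (distr (PiM {..<k} (\<lambda>_. R)) R (\<lambda>r. r j))"
    unfolding d2 using R by (simp add: prob_space_imp_sigma_finite)
  show ?thesis
    using pair_measure_distr[OF m1 m2 sf] d1 d2 by simp
qed


lemma jensen_sq:
  fixes f :: "'a \<Rightarrow> real"
  assumes M: "prob_space M" and f[measurable]: "f \<in> borel_measurable M"
    and f2: "integrable M (\<lambda>x. (f x)^2)"
  shows "(integral\<^sup>L M f)^2 \<le> (\<integral>x. (f x)^2 \<partial>M)"
proof -
  interpret prob_space M by fact
  have fi: "integrable M f" by (rule square_integrable_imp_integrable[OF f f2])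
  have "variance f = (\<integral>x. (f x)^2 \<partial>M) - (integral\<^sup>L M f)^2"
    by (rule variance_eq[OF fi f2])
  moreover have "variance f \<ge> 0" by (simp add: integral_nonneg)
  ultimately show ?thesis by simp
qed

lemma per_m:
  fixes PX :: "'x measure" and MY :: "'y measure" and P :: "('x \<times> 'y) measure"
    and R :: "'r measure" and A :: "(nat \<Rightarrow> 'x \<times> 'y) \<Rightarrow> 'r \<Rightarrow> 'x \<Rightarrow> real"
    and n k :: nat and \<epsilon> :: real
  assumes P: "prob_space P" and sets_P: "sets P = sets (PX \<Otimes>\<^sub>M MY)"
    and PX: "distr P PX fst = PX" and R: "prob_space R" and K_pos: "1 \<le> k"
    and A_meas: "(\<lambda>((d, r), x). A d r x) \<in> borel_measurable
        ((PiM {..< n - n div k} (\<lambda>_. P) \<Otimes>\<^sub>M R) \<Otimes>\<^sub>M PX)"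
    and second_moment: "integrable ((PiM {..< n - n div k} (\<lambda>_. P) \<Otimes>\<^sub>M R) \<Otimes>\<^sub>M PX)
        (\<lambda>((d, r), x). (A d r x)\<^sup>2)"
    and stable_int: "integrable (sample_space P R n k)
        (\<lambda>\<omega>. sqrt (real k * varX PX (\<lambda>x. fitted A n k 0 \<omega> x - fbar P R A n k x)))"
    and eps: "0 < \<epsilon>"
  shows "measure (sample_space P R n k) {\<omega> \<in> space (sample_space P R n k).
               \<bar>\<Sum>j<k. F_stat PX P R A n k j \<omega>\<bar> > \<epsilon>}
     \<le> (\<integral>\<omega>. sqrt (real k * varX PX (\<lambda>x. fitted A n k 0 \<omega> x - fbar P R A n k x))
            \<partial>sample_space P R n k) / \<epsilon>"
proof -
  define s where "s = n div k"
  define m' where "m' = n - s"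
  define Tm where "Tm = PiM {..<m'} (\<lambda>_. P)"
  define Pm where "Pm = Tm \<Otimes>\<^sub>M R"
  define Dm where "Dm = PiM {..<n} (\<lambda>_. P)"
  define Rk where "Rk = PiM {..<k} (\<lambda>_. R)"
  define Om where "Om = sample_space P R n k"
  have Om_eq: "Om = Dm \<Otimes>\<^sub>M Rk" unfolding Om_def sample_space_def Dm_def Rk_def ..
  interpret P: prob_space P by fact
  interpret R: prob_space R by fact
  have fstm[measurable]: "fst \<in> measurable P PX"
    by (subst measurable_cong_sets[OF sets_P refl]) simp
  interpret PX: prob_space PX using P.prob_space_distr[OF fstm] PX by simp
  interpret Tm: prob_space Tm unfolding Tm_def by (intro prob_space_PiM P)
  interpret Rk: prob_space Rk unfolding Rk_def by (intro prob_space_PiM R)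
  interpret Dm: prob_space Dm unfolding Dm_def by (intro prob_space_PiM P)
  interpret Pm: prob_space Pm unfolding Pm_def
    by (intro prob_space_pair Tm.prob_space_axioms R.prob_space_axioms)
  interpret Om: prob_space Om unfolding Om_eq
    by (intro prob_space_pair Dm.prob_space_axioms Rk.prob_space_axioms)
  interpret PmPX: pair_sigma_finite Pm PX ..
  define Af :: "((nat \<Rightarrow> 'x \<times> 'y) \<times> 'r) \<times> 'x \<Rightarrow> real" where "Af = (\<lambda>((d, r), x). A d r x)"
  have Af[measurable]: "Af \<in> borel_measurable (Pm \<Otimes>\<^sub>M PX)"
    using A_meas unfolding Af_def Pm_def Tm_def m'_def s_def .
  have Af2: "integrable (Pm \<Otimes>\<^sub>M PX) (\<lambda>z. (Af z)^2)"
    using second_moment unfolding Af_def Pm_def Tm_def m'_def s_def by (simp add: case_prod_beta')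
  have sk: "s * k \<le> n" unfolding s_def by simp
  define \<sigma> where "\<sigma> j i = (if i < j * s then i else i + s)" for j i :: nat
  define tr where "tr j d = (\<lambda>i\<in>{..<m'}. d (\<sigma> j i))" for j and d :: "nat \<Rightarrow> 'x \<times> 'y"
  have tr_eq: "train_data n k j d = tr j d" for j d
    unfolding train_data_def tr_def \<sigma>_def fold_size_def m'_def s_def by simp
  have fold_eq: "fold_idx n k j = {j * s ..< (j+1) * s}" for j
    unfolding fold_idx_def fold_size_def s_def ..
  have jsk: "(j + 1) * s \<le> n" if "j < k" for j
  proof -
    have "(j + 1) * s \<le> k * s" using that by (intro mult_right_mono) auto
    then show ?thesis using sk by (simp add: mult.commute)
  qed
  have \<sigma>_prop: "\<sigma> j i < n \<and> \<sigma> j i \<notin> fold_idx n k j" if "j < k" "i < m'" for j i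
    using that jsk[OF that(1)] unfolding fold_eq \<sigma>_def m'_def by auto
  have \<sigma>_inj: "inj_on (\<sigma> j) {..<m'}" for j
    unfolding inj_on_def \<sigma>_def by auto
  have Tmeas: "(\<lambda>\<omega>. (tr j (fst \<omega>), snd \<omega> j)) \<in> measurable (PiM S (\<lambda>_. P) \<Otimes>\<^sub>M Rk) Pm"
    if "j < k" "\<sigma> j \<in> {..<m'} \<rightarrow> S" for j S
  proof -
    have "(\<lambda>d. tr j d) \<in> measurable (PiM S (\<lambda>_. P)) Tm"
      unfolding tr_def Tm_def
      by (intro measurable_restrict measurable_component_singleton) (use that in auto)
    moreover have "(\<lambda>r. r j) \<in> measurable Rk R" unfolding Rk_def using that by simp
    ultimately show ?thesis unfolding Pm_def by measurable
  qed
  have Tdistr: "distr (PiM S (\<lambda>_. P) \<Otimes>\<^sub>M Rk) Pm (\<lambda>\<omega>. (tr j (fst \<omega>), snd \<omega> j)) = Pm"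
    if "j < k" "\<sigma> j \<in> {..<m'} \<rightarrow> S" for j S
    using train_distr[OF P R \<sigma>_inj that(2) that(1)] that
    unfolding Pm_def Tm_def Rk_def tr_def by (simp add: case_prod_beta')
  have Tmeas0: "(\<lambda>\<omega>. (tr j (fst \<omega>), snd \<omega> j)) \<in> measurable Om Pm" if "j < k" for j
    unfolding Om_eq Dm_def by (rule Tmeas) (use that \<sigma>_prop in auto)
  have Tdistr0: "distr Om Pm (\<lambda>\<omega>. (tr j (fst \<omega>), snd \<omega> j)) = Pm" if "j < k" for j
    unfolding Om_eq Dm_def by (rule Tdistr) (use that \<sigma>_prop in auto)
  have k0: "0 < k" using K_pos by simp
  define fb where "fb x = (\<integral>\<tau>. Af (\<tau>, x) \<partial>Pm)" for x
  have fb_meas[measurable]: "fb \<in> borel_measurable PX"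
    unfolding fb_def by measurable
  have Af_x[measurable]: "(\<lambda>\<tau>. Af (\<tau>, x)) \<in> borel_measurable Pm" if "x \<in> space PX" for x
    using that by measurable
  have Af_t[measurable]: "(\<lambda>x. Af (\<tau>, x)) \<in> borel_measurable PX" if "\<tau> \<in> space Pm" for \<tau>
    using that by measurable
  have fitted_eq: "fitted A n k j \<omega> x = Af ((tr j (fst \<omega>), snd \<omega> j), x)" for j \<omega> x
    unfolding fitted_def Af_def tr_eq by simp
  have fbar_eq: "fbar P R A n k x = fb x" if x: "x \<in> space PX" for x
  proof -
    have "fbar P R A n k x = (\<integral>\<omega>. Af ((tr 0 (fst \<omega>), snd \<omega> 0), x) \<partial>Om)"
      unfolding fbar_def fitted_eq Om_def ..
    also have "\<dots> = (\<integral>\<tau>. Af (\<tau>, x) \<partial>distr Om Pm (\<lambda>\<omega>. (tr 0 (fst \<omega>), snd \<omega> 0)))"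
      by (rule integral_distr[symmetric]) (use Tmeas0[OF k0] x in auto)
    finally show ?thesis unfolding Tdistr0[OF k0] fb_def .
  qed
  have Af2': "integrable (Pm \<Otimes>\<^sub>M PX) (\<lambda>(\<tau>, x). (Af (\<tau>, x))^2)"
  proof -
    have "(\<lambda>(\<tau>, x). (Af (\<tau>, x))^2) = (\<lambda>z. (Af z)^2)" by auto
    then show ?thesis using Af2 by simp
  qed
  have AEx: "AE x in PX. integrable Pm (\<lambda>\<tau>. (Af (\<tau>, x))^2)"
    using PmPX.AE_integrable_snd[of "\<lambda>\<tau> x. (Af (\<tau>, x))^2"] Af2' by simp
  have int2: "integrable PX (\<lambda>x. \<integral>\<tau>. (Af (\<tau>, x))^2 \<partial>Pm)"
    using PmPX.integrable_snd[of "\<lambda>\<tau> x. (Af (\<tau>, x))^2"] Af2' by simp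
  have fb2: "integrable PX (\<lambda>x. (fb x)^2)"
  proof (rule Bochner_Integration.integrable_bound[OF int2])
    show "(\<lambda>x. (fb x)^2) \<in> borel_measurable PX" by measurable
    show "AE x in PX. norm ((fb x)^2) \<le> norm (\<integral>\<tau>. (Af (\<tau>, x))^2 \<partial>Pm)"
      using AEx
    proof (rule AE_mp, intro AE_I2 impI)
      fix x assume x: "x \<in> space PX" and i: "integrable Pm (\<lambda>\<tau>. (Af (\<tau>, x))^2)"
      have "(fb x)^2 \<le> (\<integral>\<tau>. (Af (\<tau>, x))^2 \<partial>Pm)"
        unfolding fb_def by (rule jensen_sq[OF Pm.prob_space_axioms Af_x[OF x] i])
      then show "norm ((fb x)^2) \<le> norm (\<integral>\<tau>. (Af (\<tau>, x))^2 \<partial>Pm)" by simp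
    qed
  qed
  have fb1: "integrable PX fb" by (rule PX.square_integrable_imp_integrable[OF fb_meas fb2])
  define H where "H \<tau> x = Af (\<tau>, x) - (\<integral>z. Af (\<tau>, z) \<partial>PX) - (fb x - (\<integral>z. fb z \<partial>PX))" for \<tau> x
  have H_meas[measurable]: "(\<lambda>(\<tau>, x). H \<tau> x) \<in> borel_measurable (Pm \<Otimes>\<^sub>M PX)"
    unfolding H_def by measurable
  define V where "V \<tau> = varX PX (\<lambda>x. Af (\<tau>, x) - fb x)" for \<tau>
  have V_meas[measurable]: "V \<in> borel_measurable Pm" unfolding V_def varX_def by measurable
  have V_nonneg: "0 \<le> V \<tau>" for \<tau> unfolding V_def varX_def by (simp add: integral_nonneg)
  have AEgood: "AE \<tau> in Pm. integrable PX (\<lambda>x. (Af (\<tau>, x))^2)"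
    using PmPX.AE_integrable_fst[of "\<lambda>\<tau> x. (Af (\<tau>, x))^2"] Af2' by simp
  have iid_tau: "(\<integral>\<^sup>+a. ennreal \<bar>\<Sum>i\<in>I. H \<tau> (fst (a i))\<bar> \<partial>PiM I (\<lambda>_. P))
      \<le> ennreal (sqrt (real (card I) * V \<tau>))"
    if fin: "finite I" and \<tau>: "\<tau> \<in> space Pm" and good: "integrable PX (\<lambda>x. (Af (\<tau>, x))^2)"
    for I :: "nat set" and \<tau>
  proof -
    define g where "g x = Af (\<tau>, x) - fb x" for x
    have g_meas[measurable]: "g \<in> borel_measurable PX" unfolding g_def using \<tau> by measurable
    have a1: "integrable PX (\<lambda>x. Af (\<tau>, x))"
      by (rule PX.square_integrable_imp_integrable[OF Af_t[OF \<tau>] good])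
    have g1: "integrable PX g" unfolding g_def using a1 fb1 by auto
    have g2: "integrable PX (\<lambda>x. (g x)^2)"
    proof (rule Bochner_Integration.integrable_bound)
      show "integrable PX (\<lambda>x. 2 * (Af (\<tau>, x))^2 + 2 * (fb x)^2)" using good fb2 by auto
      show "(\<lambda>x. (g x)^2) \<in> borel_measurable PX" by measurable
      show "AE x in PX. norm ((g x)^2) \<le> norm (2 * (Af (\<tau>, x))^2 + 2 * (fb x)^2)"
      proof (rule AE_I2)
        fix x
        have h: "0 \<le> (Af (\<tau>, x) + fb x)^2" by simp
        have "(g x)^2 \<le> 2 * (Af (\<tau>, x))^2 + 2 * (fb x)^2"
          using h unfolding g_def power2_eq_square by (simp add: algebra_simps)
        then show "norm ((g x)^2) \<le> norm (2 * (Af (\<tau>, x))^2 + 2 * (fb x)^2)" by simp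
      qed
    qed
    define c where "c = integral\<^sup>L PX g"
    have H_eq: "H \<tau> x = g x - c" for x
      unfolding H_def g_def c_def using a1 fb1 by (simp add: Bochner_Integration.integral_diff)
    define u :: "'x \<times> 'y \<Rightarrow> real" where "u z = H \<tau> (fst z)" for z
    have u_meas[measurable]: "u \<in> borel_measurable P" unfolding u_def H_eq by measurable
    have HPX: "integral\<^sup>L P (\<lambda>z. F (fst z)) = integral\<^sup>L PX F" if "F \<in> borel_measurable PX" for F :: "'x \<Rightarrow> real"
      using integral_distr[OF fstm that] PX by simp
    have HPXi: "integrable P (\<lambda>z. F (fst z)) = integrable PX F" if "F \<in> borel_measurable PX" for F :: "'x \<Rightarrow> real"
      using integrable_distr_eq[OF fstm that] PX by simp
    have u0: "integral\<^sup>L P u = 0"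
      unfolding u_def H_eq using HPX[of "\<lambda>x. g x - c"] g1 c_def
      by (simp add: Bochner_Integration.integral_diff PX.prob_space)
    have gc_eq: "(\<lambda>x. (g x - c)^2) = (\<lambda>x. (g x)^2 - 2 * c * g x + c^2)"
      by (simp add: power2_diff algebra_simps)
    have gc2: "integrable PX (\<lambda>x. (g x - c)^2)" unfolding gc_eq using g1 g2 by auto
    have u2: "integrable P (\<lambda>z. (u z)^2)" unfolding u_def H_eq using HPXi[of "\<lambda>x. (g x - c)^2"] gc2 by simp
    have uV: "(\<integral>z. (u z)^2 \<partial>P) = V \<tau>"
    proof -
      have "V \<tau> = (\<integral>x. (g x - c)^2 \<partial>PX)" unfolding V_def varX_def g_def c_def by simp
      then show ?thesis unfolding u_def H_eq using HPX[of "\<lambda>x. (g x - c)^2"] by simp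
    qed
    show ?thesis using iid_bound[OF P fin u_meas u2 u0] uV unfolding u_def by simp
  qed
  have X_space: "fst (fst \<omega> i) \<in> space PX" if "\<omega> \<in> space Om" "i < n" for \<omega> i
  proof -
    have "fst \<omega> \<in> space Dm" using that(1) unfolding Om_eq by (auto simp: space_pair_measure)
    then have "fst \<omega> i \<in> space P" using that(2) unfolding Dm_def by (auto simp: space_PiM)
    then show ?thesis using measurable_space[OF fstm] by auto
  qed
  have fold_sub: "fold_idx n k j \<subseteq> {..<n}" if "j < k" for j
    using jsk[OF that] unfolding fold_eq by auto
  have int_fbar: "(\<integral>x. fbar P R A n k x \<partial>PX) = (\<integral>x. fb x \<partial>PX)"
    by (rule Bochner_Integration.integral_cong) (auto simp: fbar_eq)
  have F_eq: "F_stat PX P R A n k j \<omega> = (1 / sqrt (real n)) *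
      (\<Sum>i\<in>fold_idx n k j. H (tr j (fst \<omega>), snd \<omega> j) (fst (fst \<omega> i)))"
    if j: "j < k" and \<omega>: "\<omega> \<in> space Om" for j \<omega>
  proof -
    have "\<And>i. i \<in> fold_idx n k j \<Longrightarrow> fbar P R A n k (fst (fst \<omega> i)) = fb (fst (fst \<omega> i))"
      using X_space[OF \<omega>] fold_sub[OF j] fbar_eq by auto
    then show ?thesis by (simp add: F_stat_def fitted_eq int_fbar H_def)
  qed
  have Hc_meas: "(\<lambda>\<omega>. (1 / sqrt (real n)) *
      (\<Sum>i\<in>fold_idx n k j. H (tr j (fst \<omega>), snd \<omega> j) (fst (fst \<omega> i)))) \<in> borel_measurable Om"
    if j: "j < k" for j
  proof -
    note [measurable] = Tmeas0[OF j]
    have "(\<lambda>\<omega>. H (tr j (fst \<omega>), snd \<omega> j) (fst (fst \<omega> i))) \<in> borel_measurable Om"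
      if "i \<in> fold_idx n k j" for i
    proof -
      have i: "i < n" using that fold_sub[OF j] by auto
      have [measurable]: "(\<lambda>\<omega>. fst \<omega> i) \<in> measurable Om P" unfolding Om_eq Dm_def by (intro measurable_compose[OF measurable_fst] measurable_component_singleton) (use i in auto)
      show ?thesis by measurable
    qed
    then show ?thesis by (intro borel_measurable_times borel_measurable_const borel_measurable_sum)
  qed
  have F_meas: "(\<lambda>\<omega>. F_stat PX P R A n k j \<omega>) \<in> borel_measurable Om" if j: "j < k" for j
    using Hc_meas[OF j] by (subst measurable_cong[OF F_eq[OF j]]) auto
  have fold_bound: "(\<integral>\<^sup>+\<omega>. ennreal \<bar>F_stat PX P R A n k j \<omega>\<bar> \<partial>Om)
      \<le> (\<integral>\<^sup>+\<tau>. ennreal (sqrt (V \<tau> / real k)) \<partial>Pm)" if j: "j < k" for j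
  proof -
    define I where "I = fold_idx n k j"
    define J where "J = {..<n} - I"
    define c where "c = 1 / sqrt (real n)"
    have c0: "0 \<le> c" unfolding c_def by simp
    have I_sub: "I \<subseteq> {..<n}" unfolding I_def using fold_sub[OF j] .
    have IJ: "I \<union> J = {..<n}" "I \<inter> J = {}" using I_sub unfolding J_def by auto
    have finI: "finite I" "finite J" using I_sub unfolding J_def by (auto intro: finite_subset)
    have cardI: "card I = s" unfolding I_def fold_eq by simp
    have \<sigma>J: "\<sigma> j \<in> {..<m'} \<rightarrow> J" using \<sigma>_prop[OF j] unfolding J_def I_def by auto
    interpret psf: product_sigma_finite "\<lambda>_::nat. P"
      by (simp add: product_sigma_finite_def P.sigma_finite_measure_axioms)
    define PI where "PI = PiM I (\<lambda>_. P)"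
    define PJ where "PJ = PiM J (\<lambda>_. P)"
    interpret PI: prob_space PI unfolding PI_def by (intro prob_space_PiM P)
    interpret PJ: prob_space PJ unfolding PJ_def by (intro prob_space_pair prob_space_PiM P)
    interpret X: prob_space "PI \<Otimes>\<^sub>M PJ" by (intro prob_space_pair PI.prob_space_axioms PJ.prob_space_axioms)
    interpret XR: pair_sigma_finite "PI \<Otimes>\<^sub>M PJ" Rk ..
    interpret IJp: pair_sigma_finite PI PJ ..
    interpret JR: pair_sigma_finite PJ Rk ..
    have dm: "distr (PI \<Otimes>\<^sub>M PJ) Dm (merge I J) = Dm"
      using psf.distr_merge[OF IJ(2) finI] IJ(1) unfolding PI_def PJ_def Dm_def by simp
    have mm: "merge I J \<in> measurable (PI \<Otimes>\<^sub>M PJ) Dm"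
      unfolding PI_def PJ_def Dm_def IJ(1)[symmetric] by simp
    have dOm: "distr ((PI \<Otimes>\<^sub>M PJ) \<Otimes>\<^sub>M Rk) Om (\<lambda>(x, y). (merge I J x, y)) = Om"
    proof -
      have "distr (PI \<Otimes>\<^sub>M PJ) Dm (merge I J) \<Otimes>\<^sub>M distr Rk Rk (\<lambda>x. x)
          = distr ((PI \<Otimes>\<^sub>M PJ) \<Otimes>\<^sub>M Rk) (Dm \<Otimes>\<^sub>M Rk) (\<lambda>(x, y). (merge I J x, y))"
        by (rule pair_measure_distr[OF mm measurable_ident_sets[OF refl]])
           (simp add: Rk.sigma_finite_measure_axioms)
      then show ?thesis unfolding dm Om_eq by simp
    qed
    have dOm_meas: "(\<lambda>(x, y). (merge I J x, y)) \<in> measurable ((PI \<Otimes>\<^sub>M PJ) \<Otimes>\<^sub>M Rk) Om"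
      unfolding Om_eq using mm by measurable
    have trJ[measurable]: "tr j \<in> measurable PJ Tm"
      unfolding tr_def Tm_def PJ_def
      by (intro measurable_restrict measurable_component_singleton) (use \<sigma>J in auto)
    have rj[measurable]: "(\<lambda>r. r j) \<in> measurable Rk R" unfolding Rk_def using j by simp
    have PmPair[measurable (raw)]: "(\<lambda>x. (f x, g x)) \<in> measurable M Pm"
      if "f \<in> measurable M Tm" "g \<in> measurable M R" for M :: "'z measure" and f g
      unfolding Pm_def using that by simp
    have aI[measurable]: "(\<lambda>a. a i) \<in> measurable PI P" if "i \<in> I" for i
      unfolding PI_def using that by simp
    define f0 where "f0 \<omega> = ennreal \<bar>c * (\<Sum>i\<in>I. H (tr j (fst \<omega>), snd \<omega> j) (fst (fst \<omega> i)))\<bar>" for \<omega>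
    define G where "G z = ennreal \<bar>c * (\<Sum>i\<in>I. H (tr j (snd (fst z)), snd z j) (fst (fst (fst z) i)))\<bar>"
      for z :: "((nat \<Rightarrow> 'x \<times> 'y) \<times> (nat \<Rightarrow> 'x \<times> 'y)) \<times> (nat \<Rightarrow> 'r)"
    have f0_meas: "f0 \<in> borel_measurable Om"
      unfolding f0_def c_def I_def using Hc_meas[OF j] by measurable
    have G_meas[measurable]: "G \<in> borel_measurable ((PI \<Otimes>\<^sub>M PJ) \<Otimes>\<^sub>M Rk)"
    proof -
      have "(\<lambda>z. H (tr j (snd (fst z)), snd z j) (fst (fst (fst z) i))) \<in> borel_measurable ((PI \<Otimes>\<^sub>M PJ) \<Otimes>\<^sub>M Rk)"
        if "i \<in> I" for i using that by measurable
      then show ?thesis unfolding G_def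
        by (intro measurable_compose[OF _ measurable_ennreal] borel_measurable_abs
            borel_measurable_times borel_measurable_const borel_measurable_sum)
    qed
    have tr_merge: "tr j (merge I J (a, b)) = tr j b" for a b
      unfolding tr_def using \<sigma>J IJ(2) by (auto simp: merge_def fun_eq_iff)
    have step1: "(\<integral>\<^sup>+\<omega>. ennreal \<bar>F_stat PX P R A n k j \<omega>\<bar> \<partial>Om) = (\<integral>\<^sup>+\<omega>. f0 \<omega> \<partial>Om)"
      by (rule nn_integral_cong) (simp add: F_eq[OF j] f0_def c_def I_def)
    also have "\<dots> = (\<integral>\<^sup>+z. G z \<partial>((PI \<Otimes>\<^sub>M PJ) \<Otimes>\<^sub>M Rk))"
    proof -
      have "(\<integral>\<^sup>+\<omega>. f0 \<omega> \<partial>Om) = (\<integral>\<^sup>+\<omega>. f0 \<omega> \<partial>distr ((PI \<Otimes>\<^sub>M PJ) \<Otimes>\<^sub>M Rk) Om (\<lambda>(x, y). (merge I J x, y)))"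
        unfolding dOm ..
      also have "\<dots> = (\<integral>\<^sup>+z. f0 ((\<lambda>(x, y). (merge I J x, y)) z) \<partial>((PI \<Otimes>\<^sub>M PJ) \<Otimes>\<^sub>M Rk))"
        by (rule nn_integral_distr[OF dOm_meas]) (simp add: dOm f0_meas)
      also have "\<dots> = (\<integral>\<^sup>+z. G z \<partial>((PI \<Otimes>\<^sub>M PJ) \<Otimes>\<^sub>M Rk))"
      proof (rule nn_integral_cong)
        fix z :: "((nat \<Rightarrow> 'x \<times> 'y) \<times> (nat \<Rightarrow> 'x \<times> 'y)) \<times> (nat \<Rightarrow> 'r)"
        obtain a b r where z: "z = ((a, b), r)" by (metis prod.collapse)
        have "\<And>i. i \<in> I \<Longrightarrow> merge I J (a, b) i = a i" by (simp add: merge_def)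
        then show "f0 ((\<lambda>(x, y). (merge I J x, y)) z) = G z"
          unfolding z f0_def G_def by (simp add: tr_merge)
      qed
      finally show ?thesis .
    qed
    also have "\<dots> = (\<integral>\<^sup>+r. (\<integral>\<^sup>+x. G (x, r) \<partial>(PI \<Otimes>\<^sub>M PJ)) \<partial>Rk)"
      by (rule XR.nn_integral_snd[symmetric]) simp
    also have "\<dots> = (\<integral>\<^sup>+r. (\<integral>\<^sup>+b. (\<integral>\<^sup>+a. G ((a, b), r) \<partial>PI) \<partial>PJ) \<partial>Rk)"
    proof (rule nn_integral_cong)
      fix r assume r: "r \<in> space Rk"
      show "(\<integral>\<^sup>+x. G (x, r) \<partial>(PI \<Otimes>\<^sub>M PJ)) = (\<integral>\<^sup>+b. (\<integral>\<^sup>+a. G ((a, b), r) \<partial>PI) \<partial>PJ)"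
        by (rule IJp.nn_integral_snd[symmetric]) (use r in measurable)
    qed
    also have "\<dots> = (\<integral>\<^sup>+z. (\<integral>\<^sup>+a. G ((a, fst z), snd z) \<partial>PI) \<partial>(PJ \<Otimes>\<^sub>M Rk))"
      by (subst JR.nn_integral_snd[symmetric]) (simp_all)
    also have "\<dots> \<le> (\<integral>\<^sup>+z. ennreal (sqrt (V (tr j (fst z), snd z j) / real k)) \<partial>(PJ \<Otimes>\<^sub>M Rk))"
    proof (rule nn_integral_mono_AE)
      have Tm': "(\<lambda>\<omega>. (tr j (fst \<omega>), snd \<omega> j)) \<in> measurable (PJ \<Otimes>\<^sub>M Rk) Pm"
        unfolding PJ_def by (rule Tmeas[OF j \<sigma>J])
      have dT: "distr (PJ \<Otimes>\<^sub>M Rk) Pm (\<lambda>\<omega>. (tr j (fst \<omega>), snd \<omega> j)) = Pm"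
        unfolding PJ_def by (rule Tdistr[OF j \<sigma>J])
      have "AE \<tau> in distr (PJ \<Otimes>\<^sub>M Rk) Pm (\<lambda>\<omega>. (tr j (fst \<omega>), snd \<omega> j)). integrable PX (\<lambda>x. (Af (\<tau>, x))^2)"
        unfolding dT by (rule AEgood)
      from AE_distrD[OF Tm' this]
      have AEg: "AE z in PJ \<Otimes>\<^sub>M Rk. integrable PX (\<lambda>x. (Af ((tr j (fst z), snd z j), x))^2)" .
      show "AE z in PJ \<Otimes>\<^sub>M Rk. (\<integral>\<^sup>+a. G ((a, fst z), snd z) \<partial>PI)
          \<le> ennreal (sqrt (V (tr j (fst z), snd z j) / real k))"
        using AEg
      proof (rule AE_mp, intro AE_I2 impI)
        fix z assume z: "z \<in> space (PJ \<Otimes>\<^sub>M Rk)"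
          and good: "integrable PX (\<lambda>x. (Af ((tr j (fst z), snd z j), x))^2)"
        define \<tau> where "\<tau> = (tr j (fst z), snd z j)"
        have \<tau>: "\<tau> \<in> space Pm" unfolding \<tau>_def using measurable_space[OF Tm' z] .
        have mH: "(\<lambda>a. ennreal \<bar>\<Sum>i\<in>I. H \<tau> (fst (a i))\<bar>) \<in> borel_measurable PI"
          using \<tau> by measurable
        have "(\<integral>\<^sup>+a. G ((a, fst z), snd z) \<partial>PI) = (\<integral>\<^sup>+a. ennreal c * ennreal \<bar>\<Sum>i\<in>I. H \<tau> (fst (a i))\<bar> \<partial>PI)"
          unfolding G_def \<tau>_def using c0 by (simp add: abs_mult ennreal_mult)
        also have "\<dots> = ennreal c * (\<integral>\<^sup>+a. ennreal \<bar>\<Sum>i\<in>I. H \<tau> (fst (a i))\<bar> \<partial>PI)"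
          by (rule nn_integral_cmult[OF mH])
        also have "\<dots> \<le> ennreal c * ennreal (sqrt (real (card I) * V \<tau>))"
          by (rule mult_left_mono) (use iid_tau[OF finI(1) \<tau> good[folded \<tau>_def]] in \<open>simp_all add: PI_def\<close>)
        also have "\<dots> = ennreal (c * sqrt (real s * V \<tau>))"
          using c0 V_nonneg by (subst ennreal_mult) (auto simp: cardI)
        also have "\<dots> \<le> ennreal (sqrt (V \<tau> / real k))"
          by (rule ennreal_leI) (unfold c_def, rule scale_ineq[OF sk k0 V_nonneg])
        finally show "(\<integral>\<^sup>+a. G ((a, fst z), snd z) \<partial>PI) \<le> ennreal (sqrt (V (tr j (fst z), snd z j) / real k))"
          unfolding \<tau>_def .
      qed
    qed
    also have "\<dots> = (\<integral>\<^sup>+\<tau>. ennreal (sqrt (V \<tau> / real k)) \<partial>distr (PJ \<Otimes>\<^sub>M Rk) Pm (\<lambda>\<omega>. (tr j (fst \<omega>), snd \<omega> j)))"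
      by (rule nn_integral_distr[symmetric]) (use Tmeas[OF j \<sigma>J] in \<open>simp_all add: PJ_def\<close>)
    also have "\<dots> = (\<integral>\<^sup>+\<tau>. ennreal (sqrt (V \<tau> / real k)) \<partial>Pm)"
      using Tdistr[OF j \<sigma>J] unfolding PJ_def by simp
    finally show ?thesis .
  qed
  define B where "B = (\<integral>\<omega>. sqrt (real k * varX PX (\<lambda>x. fitted A n k 0 \<omega> x - fbar P R A n k x)) \<partial>Om)"
  have B0: "0 \<le> B" unfolding B_def by (intro Bochner_Integration.integral_nonneg real_sqrt_ge_zero mult_nonneg_nonneg) (auto simp: varX_def integral_nonneg)
  have V0_eq: "varX PX (\<lambda>x. fitted A n k 0 \<omega> x - fbar P R A n k x) = V (tr 0 (fst \<omega>), snd \<omega> 0)" for \<omega>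
  proof -
    have e: "(\<integral>z. Af ((tr 0 (fst \<omega>), snd \<omega> 0), z) - fbar P R A n k z \<partial>PX)
        = (\<integral>z. Af ((tr 0 (fst \<omega>), snd \<omega> 0), z) - fb z \<partial>PX)"
      by (rule Bochner_Integration.integral_cong) (auto simp: fbar_eq)
    show ?thesis unfolding V_def varX_def fitted_eq e
      by (rule Bochner_Integration.integral_cong) (auto simp: fbar_eq)
  qed
  have kV: "real k * sqrt (v / real k) = sqrt (real k * v)" if "0 \<le> v" for v
  proof -
    have "sqrt (real k * v) = sqrt (real k) * sqrt v" by (simp add: real_sqrt_mult)
    moreover have "real k * sqrt (v / real k) = real k * sqrt v / sqrt (real k)" by (simp add: real_sqrt_divide)
    moreover have "real k = sqrt (real k) * sqrt (real k)" by simp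
    ultimately show ?thesis using k0 by (metis nonzero_mult_div_cancel_left real_sqrt_gt_0_iff of_nat_0_less_iff
          order_less_irrefl mult.assoc times_divide_eq_right)
  qed
  have SumF_meas: "(\<lambda>\<omega>. \<Sum>j<k. F_stat PX P R A n k j \<omega>) \<in> borel_measurable Om"
    by (intro borel_measurable_sum F_meas) simp
  have intle: "(\<integral>\<^sup>+\<omega>. ennreal \<bar>\<Sum>j<k. F_stat PX P R A n k j \<omega>\<bar> \<partial>Om) \<le> ennreal B"
  proof -
    have "(\<integral>\<^sup>+\<omega>. ennreal \<bar>\<Sum>j<k. F_stat PX P R A n k j \<omega>\<bar> \<partial>Om)
        \<le> (\<integral>\<^sup>+\<omega>. (\<Sum>j<k. ennreal \<bar>F_stat PX P R A n k j \<omega>\<bar>) \<partial>Om)"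
      by (rule nn_integral_mono) (simp add: ennreal_leI sum_abs)
    also have "\<dots> = (\<Sum>j<k. \<integral>\<^sup>+\<omega>. ennreal \<bar>F_stat PX P R A n k j \<omega>\<bar> \<partial>Om)"
      by (rule nn_integral_sum) (use F_meas in simp)
    also have "\<dots> \<le> (\<Sum>j<k. \<integral>\<^sup>+\<tau>. ennreal (sqrt (V \<tau> / real k)) \<partial>Pm)"
      by (rule sum_mono) (use fold_bound in simp)
    also have "\<dots> = ennreal (real k) * (\<integral>\<^sup>+\<tau>. ennreal (sqrt (V \<tau> / real k)) \<partial>Pm)"
      by (simp add: ennreal_of_nat_eq_real_of_nat)
    also have "\<dots> = (\<integral>\<^sup>+\<tau>. ennreal (real k) * ennreal (sqrt (V \<tau> / real k)) \<partial>Pm)"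
      by (rule nn_integral_cmult[symmetric]) simp
    also have "\<dots> = (\<integral>\<^sup>+\<tau>. ennreal (sqrt (real k * V \<tau>)) \<partial>Pm)"
      by (rule nn_integral_cong) (simp add: ennreal_mult[symmetric] kV V_nonneg)
    also have "\<dots> = (\<integral>\<^sup>+\<tau>. ennreal (sqrt (real k * V \<tau>)) \<partial>distr Om Pm (\<lambda>\<omega>. (tr 0 (fst \<omega>), snd \<omega> 0)))"
      unfolding Tdistr0[OF k0] ..
    also have "\<dots> = (\<integral>\<^sup>+\<omega>. ennreal (sqrt (real k * V (tr 0 (fst \<omega>), snd \<omega> 0))) \<partial>Om)"
      by (rule nn_integral_distr) (use Tmeas0[OF k0] in simp_all)
    also have "\<dots> = ennreal B"
      unfolding B_def V0_eq[symmetric]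
      by (rule nn_integral_eq_integral) (use stable_int in \<open>auto simp: Om_def varX_def intro!: Bochner_Integration.integral_nonneg\<close>)
    finally show ?thesis .
  qed
  define S where "S = {\<omega> \<in> space Om. \<epsilon> < \<bar>\<Sum>j<k. F_stat PX P R A n k j \<omega>\<bar>}"
  have Sm: "S \<in> sets Om" unfolding S_def using SumF_meas by measurable
  have "ennreal \<epsilon> * emeasure Om S = (\<integral>\<^sup>+\<omega>. ennreal \<epsilon> * indicator S \<omega> \<partial>Om)"
    by (rule nn_integral_cmult_indicator[symmetric, OF Sm])
  also have "\<dots> \<le> (\<integral>\<^sup>+\<omega>. ennreal \<bar>\<Sum>j<k. F_stat PX P R A n k j \<omega>\<bar> \<partial>Om)"
    by (rule nn_integral_mono) (auto simp: S_def indicator_def intro!: ennreal_leI)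
  also note intle
  finally have "ennreal (\<epsilon> * measure Om S) \<le> ennreal B"
    using eps by (simp add: Om.emeasure_eq_measure ennreal_mult)
  then have "\<epsilon> * measure Om S \<le> B" using B0 by (simp add: ennreal_le_iff)
  then have "measure Om S \<le> B / \<epsilon>" using eps by (simp add: pos_le_divide_eq mult.commute)
  then show ?thesis unfolding S_def B_def Om_def .
qed

theorem lemma2:
  fixes PX :: "'x measure" and MY :: "'y measure" and P :: "('x \<times> 'y) measure"
    and R :: "nat \<Rightarrow> 'r measure"
    and A :: "nat \<Rightarrow> (nat \<Rightarrow> 'x \<times> 'y) \<Rightarrow> 'r \<Rightarrow> 'x \<Rightarrow> real"
    and N K :: "nat \<Rightarrow> nat"
  assumes P: "prob_space P" and sets_P: "sets P = sets (PX \<Otimes>\<^sub>M MY)"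
    and PX: "distr P PX fst = PX"
    and R: "\<And>m. prob_space (R m)"
    and K_pos: "\<And>m. 1 \<le> K m" and K_dvd: "\<And>m. K m dvd N m"
    and N_lim: "filterlim N at_top sequentially"
    and A_meas: "\<And>m. (\<lambda>((d, r), x). A m d r x) \<in> borel_measurable
        ((PiM {..< N m - N m div K m} (\<lambda>_. P) \<Otimes>\<^sub>M R m) \<Otimes>\<^sub>M PX)"
    and second_moment: "\<And>m. integrable
        ((PiM {..< N m - N m div K m} (\<lambda>_. P) \<Otimes>\<^sub>M R m) \<Otimes>\<^sub>M PX)
        (\<lambda>((d, r), x). (A m d r x)\<^sup>2)"
    and stable_int: "\<And>m. integrable (sample_space P (R m) (N m) (K m))
        (\<lambda>\<omega>. sqrt (real (K m) * varX PX (\<lambda>x. fitted (A m) (N m) (K m) 0 \<omega> x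
                                           - fbar P (R m) (A m) (N m) (K m) x)))"
    and stable: "(\<lambda>m. \<integral>\<omega>. sqrt (real (K m) * varX PX (\<lambda>x. fitted (A m) (N m) (K m) 0 \<omega> x
                                           - fbar P (R m) (A m) (N m) (K m) x))
                     \<partial>sample_space P (R m) (N m) (K m)) \<longlonglongrightarrow> 0"
  shows "\<forall>\<epsilon>>0. (\<lambda>m. measure (sample_space P (R m) (N m) (K m))
            {\<omega> \<in> space (sample_space P (R m) (N m) (K m)).
               \<bar>\<Sum>j<K m. F_stat PX P (R m) (A m) (N m) (K m) j \<omega>\<bar> > \<epsilon>}) \<longlonglongrightarrow> 0"
proof (intro allI impI)
  fix \<epsilon> :: real assume eps: "\<epsilon> > 0"
  show "(\<lambda>m. measure (sample_space P (R m) (N m) (K m))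
            {\<omega> \<in> space (sample_space P (R m) (N m) (K m)).
               \<bar>\<Sum>j<K m. F_stat PX P (R m) (A m) (N m) (K m) j \<omega>\<bar> > \<epsilon>}) \<longlonglongrightarrow> 0"
  proof (rule real_tendsto_sandwich[where f="\<lambda>_. 0" and h="\<lambda>m. (\<integral>\<omega>. sqrt (real (K m) * varX PX (\<lambda>x. fitted (A m) (N m) (K m) 0 \<omega> x
                                           - fbar P (R m) (A m) (N m) (K m) x))
                     \<partial>sample_space P (R m) (N m) (K m)) / \<epsilon>"])
    show "\<forall>\<^sub>F m in sequentially. 0 \<le> measure (sample_space P (R m) (N m) (K m))
            {\<omega> \<in> space (sample_space P (R m) (N m) (K m)).
               \<bar>\<Sum>j<K m. F_stat PX P (R m) (A m) (N m) (K m) j \<omega>\<bar> > \<epsilon>}"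
      by simp
    show "\<forall>\<^sub>F m in sequentially. measure (sample_space P (R m) (N m) (K m))
            {\<omega> \<in> space (sample_space P (R m) (N m) (K m)).
               \<bar>\<Sum>j<K m. F_stat PX P (R m) (A m) (N m) (K m) j \<omega>\<bar> > \<epsilon>}
          \<le> (\<integral>\<omega>. sqrt (real (K m) * varX PX (\<lambda>x. fitted (A m) (N m) (K m) 0 \<omega> x
                                           - fbar P (R m) (A m) (N m) (K m) x))
                     \<partial>sample_space P (R m) (N m) (K m)) / \<epsilon>"
      by (intro always_eventually allI per_m[OF P sets_P PX R K_pos A_meas second_moment stable_int eps])
    show "(\<lambda>_. 0) \<longlonglongrightarrow> (0::real)" by simp
    show "(\<lambda>m. (\<integral>\<omega>. sqrt (real (K m) * varX PX (\<lambda>x. fitted (A m) (N m) (K m) 0 \<omega> x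
                                           - fbar P (R m) (A m) (N m) (K m) x))
                     \<partial>sample_space P (R m) (N m) (K m)) / \<epsilon>) \<longlonglongrightarrow> 0"
      using tendsto_divide[OF stable tendsto_const[of \<epsilon>]] eps by simp
  qed
qed

end
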